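(* Let $n>2$, $V=\mathbb{F}_2^n$, and let $M$ be any maximal subgroup of the translation group $T$. Then $C_{\mathrm{Sym}(V)}(M)<\mathrm{AGL}(V)$, and $|C_{\mathrm{Sym}(V)}(M)|=2^{2n-1}$.
   Context: $T=\{\sigma_v: v\in V\}\le\mathrm{Sym}(V)$ is the group of translations $\sigma_v:x\mapsto x+v$. $\mathrm{AGL}(V)=T\rtimes\mathrm{GL}(V)$ is the affine group, the group of maps $x\mapsto xL+v$ with $L\in\mathrm{GL}(V)$, $v\in V$; it equals the normaliser of $T$ in $\mathrm{Sym}(V)$. *)

theory Defs
  imports "HOL-Analysis.Analysis" "HOL-Library.Z2" "HOL-Algebra.Bij"
begin

text \<open>V = F_2^n is modelled as the type bit ^ 'n, with n = CARD('n).
  Sym(V) is the group BijGroup UNIV of all bijections of V (composition).\<close>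

definition Sym_V :: "('a \<Rightarrow> 'a) monoid" where
  "Sym_V = BijGroup UNIV"

definition transl_group :: "((bit ^ 'n) \<Rightarrow> (bit ^ 'n)) set" where
  "transl_group = {(\<lambda>x. x + v) | v. True}"

definition GL_V :: "((bit ^ 'n) \<Rightarrow> (bit ^ 'n)) set" where
  "GL_V = {L. Vector_Spaces.linear (*s) (*s) L \<and> bij L}"

definition AGL_V :: "((bit ^ 'n) \<Rightarrow> (bit ^ 'n)) set" where
  "AGL_V = {(\<lambda>x. L x + v) | L v. L \<in> GL_V}"

definition maximal_subgroup_of :: "'a set \<Rightarrow> 'a set \<Rightarrow> ('a, 'b) monoid_scheme \<Rightarrow> bool" where
  "maximal_subgroup_of M H G \<longleftrightarrow>
     subgroup M G \<and> M \<subseteq> H \<and> M \<noteq> H \<and>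
     (\<forall>K. subgroup K G \<and> M \<subseteq> K \<and> K \<subseteq> H \<longrightarrow> K = M \<or> K = H)"

definition centraliser :: "('a, 'b) monoid_scheme \<Rightarrow> 'a set \<Rightarrow> 'a set" where
  "centraliser G S = {g \<in> carrier G. \<forall>s\<in>S. g \<otimes>\<^bsub>G\<^esub> s = s \<otimes>\<^bsub>G\<^esub> g}"

end

theory Submission
  imports Defs
begin

lemma bit_add_self[simp]: "(x::bit) + x = 0" by (cases x) simp_all
lemma bit_add_self2[simp]: "(y::bit) + (x + x) = y" by simp
lemma vec_add_self[simp]: "(x::bit^'n) + x = 0" by (simp add: vec_eq_iff)
lemma vec_add_self3[simp]: "(x::bit^'n) + (x + y) = y" by (simp add: add.assoc[symmetric])
lemma vec_add_self4[simp]: "(y::bit^'n) + x + x = y" by (simp add: add.assoc)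

lemma UNIV_bit: "(UNIV::bit set) = {0,1}" by auto
lemma card_UNIV_bit: "card (UNIV::bit set) = 2" by (simp add: UNIV_bit)
lemma card_UNIV_bitvec: "card (UNIV::(bit^'n) set) = 2 ^ CARD('n)"
  by (simp add: card_UNIV_bit)
lemma finite_UNIV_bitvec: "finite (UNIV::(bit^'n) set)"
  by (rule card_ge_0_finite) (simp add: card_UNIV_bit)

lemma carrier_Sym: "carrier (Sym_V :: ('a\<Rightarrow>'a) monoid) = {f. bij f}"
  by (auto simp: Sym_V_def BijGroup_def Bij_def extensional_def)

lemma mult_Sym: "f \<in> carrier Sym_V \<Longrightarrow> g \<in> carrier Sym_V \<Longrightarrow> f \<otimes>\<^bsub>Sym_V\<^esub> g = f \<circ> g"
  by (auto simp: Sym_V_def BijGroup_def compose_def restrict_def fun_eq_iff)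

lemma one_Sym: "\<one>\<^bsub>Sym_V\<^esub> = id"
  by (auto simp: Sym_V_def BijGroup_def restrict_def fun_eq_iff)

lemma group_Sym: "group Sym_V"
  by (simp add: Sym_V_def group_BijGroup)

definition tr :: "bit^'n \<Rightarrow> (bit^'n \<Rightarrow> bit^'n)" where
  "tr v = (\<lambda>x. x + v)"

lemma tr_bij: "bij (tr v)"
  by (rule o_bij[of "tr v"]) (auto simp: tr_def fun_eq_iff)

lemma tr_carrier: "tr v \<in> carrier Sym_V"
  using tr_bij by (simp add: carrier_Sym)

lemma tr_mult: "tr a \<otimes>\<^bsub>Sym_V\<^esub> tr b = tr (a + b)"
  by (simp add: mult_Sym tr_carrier) (auto simp: tr_def fun_eq_iff add_ac)

lemma tr_inj: "tr a = tr b \<longleftrightarrow> a = b"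
  by (metis add_0 tr_def)

lemma transl_group_eq: "transl_group = range tr"
  by (auto simp: transl_group_def tr_def)

lemma tr0: "tr 0 = id" by (simp add: tr_def fun_eq_iff)

lemma transl_subgroup:
  assumes "0 \<in> U" "\<And>a b. a \<in> U \<Longrightarrow> b \<in> U \<Longrightarrow> a + b \<in> U"
  shows "subgroup (tr ` U) Sym_V"
proof (rule group.subgroupI[OF group_Sym])
  show "tr ` U \<subseteq> carrier Sym_V" using tr_carrier by auto
  show "tr ` U \<noteq> {}" using assms by auto
  fix a assume "a \<in> tr ` U"
  then obtain u where u: "u \<in> U" "a = tr u" by auto
  have "inv\<^bsub>Sym_V\<^esub> (tr u) = tr u"
    by (rule group.inv_equality[OF group_Sym]) (auto simp: tr_mult tr_carrier tr0 one_Sym)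
  then show "inv\<^bsub>Sym_V\<^esub> a \<in> tr ` U" using u by auto
next
  fix a b assume "a \<in> tr ` U" "b \<in> tr ` U"
  then show "a \<otimes>\<^bsub>Sym_V\<^esub> b \<in> tr ` U" using assms(2) by (auto simp: tr_mult)
qed


theorem mainTheorem5:
  fixes M :: "((bit ^ 'n) \<Rightarrow> (bit ^ 'n)) set"
  assumes "CARD('n) > 2"
    and "maximal_subgroup_of M transl_group Sym_V"
  shows "centraliser Sym_V M \<subset> AGL_V
    \<and> card (centraliser Sym_V M) = 2 ^ (2 * CARD('n) - 1)"
proof -
  from assms(2) have sgM: "subgroup M Sym_V" and MT: "M \<subseteq> transl_group"
    and MnT: "M \<noteq> transl_group"
    and maxl: "\<And>K. subgroup K Sym_V \<Longrightarrow> M \<subseteq> K \<Longrightarrow> K \<subseteq> transl_group \<Longrightarrow> K = M \<or> K = transl_group"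
    unfolding maximal_subgroup_of_def by auto
  define W where "W = {v::bit^'n. tr v \<in> M}"
  have Meq: "M = tr ` W"
    using MT by (auto simp: W_def transl_group_eq)
  have W0: "0 \<in> W"
    using subgroup.one_closed[OF sgM] by (simp add: W_def one_Sym tr0)
  have Wadd: "\<And>a b. a \<in> W \<Longrightarrow> b \<in> W \<Longrightarrow> a + b \<in> W"
    using subgroup.m_closed[OF sgM] by (auto simp: W_def tr_mult[symmetric])
  obtain e where eW: "e \<notin> W"
    using MnT MT Meq by (auto simp: transl_group_eq)
  have idx0: "\<forall>v. v \<in> W \<or> v + e \<in> W"
  proof (rule ccontr)
    assume "\<not> (\<forall>v. v \<in> W \<or> v + e \<in> W)"
    then obtain v where v: "v \<notin> W" "v + e \<notin> W" by auto
    let ?U = "{u. u \<in> W \<or> u + v \<in> W}"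
    have U0: "0 \<in> ?U" using W0 by auto
    have Uadd: "a + b \<in> ?U" if "a \<in> ?U" "b \<in> ?U" for a b
    proof -
      have e1: "a + b = (a + v) + (b + v)" by (simp add: add_ac)
      have e2: "a + b + v = a + (b + v)" "a + b + v = (a + v) + b" by (simp_all add: add_ac)
      from that consider "a \<in> W" "b \<in> W" | "a \<in> W" "b + v \<in> W" | "a + v \<in> W" "b \<in> W"
        | "a + v \<in> W" "b + v \<in> W" by blast
      then show ?thesis
      proof cases
        case 1 then show ?thesis using Wadd by blast
      next
        case 2 then have "a + b + v \<in> W" using Wadd[of a "b + v"] e2 by metis
        then show ?thesis by blast
      next
        case 3 then have "a + b + v \<in> W" using Wadd[of "a + v" b] e2 by metis
        then show ?thesis by blast
      next
        case 4 then have "a + b \<in> W" using Wadd[of "a + v" "b + v"] e1 by metis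
        then show ?thesis by blast
      qed
    qed
    have sgK: "subgroup (tr ` ?U) Sym_V" by (rule transl_subgroup[OF U0 Uadd])
    have "M \<subseteq> tr ` ?U" using Meq by auto
    moreover have "tr ` ?U \<subseteq> transl_group" by (auto simp: transl_group_eq)
    moreover have "tr ` ?U \<noteq> M"
    proof
      assume "tr ` ?U = M"
      moreover have "tr v \<in> tr ` ?U" using W0 by auto
      ultimately show False using v by (auto simp: W_def)
    qed
    ultimately have "tr ` ?U = transl_group" using maxl[OF sgK] by auto
    then have "tr e \<in> tr ` ?U" by (auto simp: transl_group_eq)
    then have "e \<in> ?U" by (auto simp: tr_inj)
    then show False using eW v by (auto simp: add.commute)
  qed
  have idx: "\<And>v. v \<in> W \<or> v + e \<in> W" using idx0 by blast
  have Wsum: "\<And>x y. x \<notin> W \<Longrightarrow> y \<notin> W \<Longrightarrow> x + y \<in> W"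
  proof -
    fix x y assume "x \<notin> W" "y \<notin> W"
    then have "x + e \<in> W" "y + e \<in> W" using idx by blast+
    then have "(x + e) + (y + e) \<in> W" using Wadd by blast
    moreover have "(x + e) + (y + e) = x + y" by (simp add: add_ac)
    ultimately show "x + y \<in> W" by simp
  qed
  have Wmix: "\<And>x y. x \<in> W \<Longrightarrow> y \<notin> W \<Longrightarrow> x + y \<notin> W"
    using Wadd vec_add_self3 by metis
  have Cchar: "g \<in> centraliser Sym_V M \<longleftrightarrow> bij g \<and> (\<forall>w\<in>W. \<forall>x. g (x + w) = g x + w)" for g
  proof -
    have "g \<in> centraliser Sym_V M \<longleftrightarrow> bij g \<and> (\<forall>w\<in>W. g \<circ> tr w = tr w \<circ> g)"
    proof -
      have m1: "\<And>w. bij g \<Longrightarrow> g \<otimes>\<^bsub>Sym_V\<^esub> tr w = g \<circ> tr w"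
        using mult_Sym tr_carrier carrier_Sym by (metis mem_Collect_eq)
      have m2: "\<And>w. bij g \<Longrightarrow> tr w \<otimes>\<^bsub>Sym_V\<^esub> g = tr w \<circ> g"
        using mult_Sym tr_carrier carrier_Sym by (metis mem_Collect_eq)
      show ?thesis unfolding centraliser_def Meq
        by (auto simp: carrier_Sym m1 m2)
    qed
    also have "\<dots> \<longleftrightarrow> bij g \<and> (\<forall>w\<in>W. \<forall>x. g (x + w) = g x + w)"
      by (auto simp: fun_eq_iff tr_def)
    finally show ?thesis .
  qed
  define G where "G a b = (\<lambda>x. if x \<in> W then x + a else x + e + b)" for a b :: "bit^'n"
  define P where "P = {(a, b). a + b \<notin> W}"
  have G_bij: "bij (G a b)" if "(a, b) \<in> P" for a b
  proof -
    have "inj (G a b)"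
    proof (rule injI)
      fix x y assume eq: "G a b x = G a b y"
      show "x = y"
      proof (cases "x \<in> W"; cases "y \<in> W")
        assume "x \<in> W" "y \<notin> W"
        then have "x + (y + e) \<in> W" using idx Wadd by blast
        moreover have "x + (y + e) = a + b"
          using eq \<open>x \<in> W\<close> \<open>y \<notin> W\<close> unfolding G_def
          by simp (metis add.assoc add.commute vec_add_self3)
        ultimately show ?thesis using that P_def by auto
      next
        assume "x \<notin> W" "y \<in> W"
        then have "y + (x + e) \<in> W" using idx Wadd by blast
        moreover have "y + (x + e) = a + b"
          using eq \<open>x \<notin> W\<close> \<open>y \<in> W\<close> unfolding G_def
          by simp (metis add.assoc add.commute vec_add_self3)
        ultimately show ?thesis using that P_def by auto
      qed (use eq in \<open>auto simp: G_def\<close>)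
    qed
    then show ?thesis using finite_UNIV_inj_surj[OF finite_UNIV_bitvec] by (simp add: bij_def)
  qed
  have Ceq: "centraliser Sym_V M = (\<lambda>(a, b). G a b) ` P"
  proof
    show "(\<lambda>(a, b). G a b) ` P \<subseteq> centraliser Sym_V M"
    proof clarify
      fix a b assume ab: "(a, b) \<in> P"
      have "\<forall>w\<in>W. \<forall>x. G a b (x + w) = G a b x + w"
      proof (intro ballI allI)
        fix w x assume w: "w \<in> W"
        have "x + w \<in> W \<longleftrightarrow> x \<in> W"
          using Wadd w Wmix by (metis add.commute)
        then show "G a b (x + w) = G a b x + w" by (auto simp: G_def add_ac)
      qed
      then show "G a b \<in> centraliser Sym_V M" using Cchar G_bij[OF ab] by auto
    qed
  next
    show "centraliser Sym_V M \<subseteq> (\<lambda>(a, b). G a b) ` P"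
    proof
      fix g assume gC: "g \<in> centraliser Sym_V M"
      then have bg: "bij g" and cg: "\<And>w x. w \<in> W \<Longrightarrow> g (x + w) = g x + w"
        using Cchar by auto
      have "g = G (g 0) (g e)"
      proof
        fix x
        show "g x = G (g 0) (g e) x"
        proof (cases "x \<in> W")
          case True
          then show ?thesis using cg[of x 0] by (simp add: G_def add.commute)
        next
          case False
          then have "x + e \<in> W" using idx by blast
          then have "g (e + (x + e)) = g e + (x + e)" using cg by blast
          moreover have "e + (x + e) = x" by (simp add: add_ac)
          ultimately show ?thesis using False by (simp add: G_def add_ac)
        qed
      qed
      moreover have "(g 0, g e) \<in> P"
      proof (rule ccontr)
        assume "(g 0, g e) \<notin> P"
        then have s: "g 0 + g e \<in> W" by (simp add: P_def)
        have "g (0 + (g 0 + g e)) = g 0 + (g 0 + g e)" using cg[OF s] by blast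
        then have "g (g 0 + g e) = g e" by simp
        then have "g 0 + g e = e" using bg by (simp add: bij_def inj_eq)
        then show False using s eW by simp
      qed
      ultimately show "g \<in> (\<lambda>(a, b). G a b) ` P" by force
    qed
  qed
  have Ginj: "inj_on (\<lambda>(a, b). G a b) P"
  proof (rule inj_onI, clarify)
    fix a b a' b' assume "G a b = G a' b'"
    then have "G a b 0 = G a' b' 0" "G a b e = G a' b' e" by auto
    then show "a = a' \<and> b = b'" using W0 eW by (simp add: G_def)
  qed
  have cardCP: "card (centraliser Sym_V M) = card P"
    using Ceq card_image[OF Ginj] by simp
  have n1: "CARD('n) \<ge> 1" using assms(1) by simp
  have bb: "bij_betw (\<lambda>x. x + e) W (- W)"
  proof (rule bij_betw_byWitness[where f'="\<lambda>x. x + e"])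
    show "(\<lambda>x. x + e) ` W \<subseteq> - W" using Wmix eW by auto
    show "(\<lambda>x. x + e) ` (- W) \<subseteq> W" using idx by auto
  qed auto
  have cardWW: "card W = card (- W)" using bij_betw_same_card[OF bb] .
  have "card W + card (- W) = card (UNIV :: (bit^'n) set)"
  proof -
    have "card (W \<union> - W) = card W + card (- W)"
      by (rule card_Un_disjoint) (auto intro: finite_subset[OF _ finite_UNIV_bitvec])
    moreover have "W \<union> - W = UNIV" by auto
    ultimately show ?thesis by simp
  qed
  moreover have "(2::nat) ^ CARD('n) = 2 * 2 ^ (CARD('n) - 1)"
    using n1 by (metis Suc_diff_le diff_Suc_1 power_Suc)
  ultimately have cardW: "card (- W) = 2 ^ (CARD('n) - 1)"
    using cardWW card_UNIV_bitvec[where 'n='n] by simp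
  have Peq: "P = (\<lambda>(a, d). (a, a + d)) ` (UNIV \<times> - W)"
  proof
    show "P \<subseteq> (\<lambda>(a, d). (a, a + d)) ` (UNIV \<times> - W)"
    proof clarify
      fix a b assume "(a, b) \<in> P"
      then have "(a, a + b) \<in> UNIV \<times> - W" by (simp add: P_def)
      moreover have "(a, b) = (\<lambda>(a, d). (a, a + d)) (a, a + b)" by simp
      ultimately show "(a, b) \<in> (\<lambda>(a, d). (a, a + d)) ` (UNIV \<times> - W)" by blast
    qed
    show "(\<lambda>(a, d). (a, a + d)) ` (UNIV \<times> - W) \<subseteq> P" by (auto simp: P_def)
  qed
  have injm: "inj_on (\<lambda>(a, d). (a, a + d)) ((UNIV :: (bit^'n) set) \<times> - W)"
    by (rule inj_onI) (auto)
  have "card P = card ((UNIV :: (bit^'n) set) \<times> - W)" unfolding Peq using card_image[OF injm] by simp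
  also have "\<dots> = 2 ^ CARD('n) * 2 ^ (CARD('n) - 1)"
    by (simp only: card_cartesian_product cardW card_UNIV_bitvec)
  also have "\<dots> = 2 ^ (CARD('n) + (CARD('n) - 1))"
    by (simp only: power_add)
  also have "CARD('n) + (CARD('n) - 1) = 2 * CARD('n) - 1"
    using n1 by simp
  finally have cardC: "card (centraliser Sym_V M) = 2 ^ (2 * CARD('n) - 1)"
    using cardCP by simp
  have CA: "centraliser Sym_V M \<subseteq> AGL_V"
  proof
    fix g assume "g \<in> centraliser Sym_V M"
    then obtain a b where ab: "(a, b) \<in> P" "g = G a b" using Ceq by auto
    define d where "d = e + a + b"
    define L where "L x = (if x \<in> W then x else x + d)" for x
    have abW: "a + b \<notin> W" using ab by (simp add: P_def)
    have dW: "x + d \<notin> W" if "x \<notin> W" for x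
    proof -
      have xe: "x + e \<in> W" using that idx by blast
      have h: "(x + e) + (a + b) \<notin> W" by (rule Wmix[OF xe abW])
      have eq: "x + d = (x + e) + (a + b)" by (simp add: d_def add_ac)
      show ?thesis unfolding eq by (rule h)
    qed
    have Ladd: "L (x + y) = L x + L y" for x y
    proof (cases "x \<in> W"; cases "y \<in> W")
      assume "x \<in> W" "y \<in> W" then show ?thesis using Wadd by (simp add: L_def)
    next
      assume "x \<in> W" "y \<notin> W" then show ?thesis using Wmix by (simp add: L_def add_ac)
    next
      assume "x \<notin> W" "y \<in> W" then show ?thesis using Wmix[of y x] by (simp add: L_def add_ac)
    next
      assume "x \<notin> W" "y \<notin> W" then show ?thesis using Wsum by (simp add: L_def add_ac)
    qed
    have Lsc: "L (c *s x) = c *s L x" for c x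
    proof (cases c)
      case zero then show ?thesis using W0 by (simp add: L_def)
    next
      case one then show ?thesis by simp
    qed
    have linL: "Vector_Spaces.linear (*s) (*s) L"
      unfolding Vector_Spaces.linear_iff using Ladd Lsc vec.vector_space_axioms by blast
    have LL: "L (L x) = x" for x
      using dW by (simp add: L_def)
    have bL: "bij L" by (rule o_bij[of L L]) (auto simp: fun_eq_iff LL)
    have "g = (\<lambda>x. L x + a)"
      by (auto simp: ab(2) G_def L_def d_def fun_eq_iff add_ac)
    then show "g \<in> AGL_V" using linL bL unfolding AGL_V_def GL_V_def by blast
  qed
  have cW2: "card W \<ge> 2"
  proof -
    have "CARD('n) - 1 \<ge> 1" using assms(1) by simp
    then have "(2::nat) ^ 1 \<le> 2 ^ (CARD('n) - 1)" by (rule power_increasing) simp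
    then show ?thesis using cardW cardWW by simp
  qed
  obtain w where w: "w \<in> W" "w \<noteq> 0"
  proof -
    have "\<not> W \<subseteq> {0}"
    proof
      assume "W \<subseteq> {0}"
      then have "card W \<le> card {0::bit^'n}" by (rule card_mono[rotated]) simp
      then show False using cW2 by simp
    qed
    then show ?thesis using that by blast
  qed
  obtain i where wi: "w $ i = 1"
    using w(2) by (metis vec_eq_iff zero_index bit_not_zero_iff)
  obtain j where ji: "j \<noteq> (i::'n)"
  proof -
    have "(UNIV::'n set) \<noteq> {i}"
    proof
      assume "(UNIV::'n set) = {i}"
      then have "CARD('n) = card {i}" by (simp only:)
      then show False using assms(1) by simp
    qed
    then show ?thesis using that by blast
  qed
  define u where "u = (axis j (1::bit) :: bit^'n)"
  define Tr where "Tr x = x + (x $ i) *s u" for x :: "bit^'n"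
  have ui: "u $ i = 0" using ji by (simp add: u_def axis_def)
  have uj: "u $ j = 1" by (simp add: u_def axis_def)
  have linT: "Vector_Spaces.linear (*s) (*s) Tr"
    unfolding Vector_Spaces.linear_iff using vec.vector_space_axioms
    by (auto simp: Tr_def vec_eq_iff algebra_simps)
  have TT: "Tr (Tr x) = x" for x
  proof -
    have "Tr x $ i = x $ i" using ui by (simp add: Tr_def)
    then show ?thesis by (simp add: Tr_def Tr_def[of x] add.assoc)
  qed
  have bT: "bij Tr" by (rule o_bij[of Tr Tr]) (auto simp: fun_eq_iff TT)
  have TA: "Tr \<in> AGL_V"
  proof -
    have "Tr = (\<lambda>x. Tr x + 0)" by simp
    then show ?thesis using linT bT unfolding AGL_V_def GL_V_def by blast
  qed
  have TnC: "Tr \<notin> centraliser Sym_V M"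
  proof
    assume "Tr \<in> centraliser Sym_V M"
    then have "Tr (0 + w) = Tr 0 + w" using Cchar w(1) by blast
    then have "u = 0" using wi by (simp add: Tr_def)
    then show False using uj by simp
  qed
  show ?thesis using CA TA TnC cardC by blast
qed

end
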